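(* Let $\gamma \ge 0$ be a random variable (the channel power gain) with probability density function $f_\gamma$, let $\mathbb{E}[\cdot]$ denote expectation over $\gamma$, and fix constants $\theta>0$, $\beta>0$, $\bar P_\tau>0$ and $0<\tau<T$. Consider the optimization problem (P3) over sampling-rate functions $\lambda(\gamma)$: $$\min_{\lambda(\cdot)} \ \mathbb{E}\!\left[\lambda(\gamma)\left(\beta e^{\theta/\lambda(\gamma)}-1\right)\right]\quad\text{s.t.}\quad \mathbb{E}\!\left[\frac{\lambda(\gamma)}{\gamma}\right]\le \bar P_\tau,\qquad \tau\lambda(\gamma)\le 1,\qquad T\lambda(\gamma)\ge 1 .$$ Then the optimal sampling scheme $\lambda_{\rm opt}(\gamma)$ for this problem is $$\lambda_{\rm opt}(\gamma)=\begin{cases}\dfrac{1}{T}, & 0\le \gamma<\gamma_1^{\rm th},\\[2mm] \dfrac{\theta}{1+\mathcal{W}\!\left(\frac{\eta-\gamma}{e\beta\gamma}\right)}, & \gamma_1^{\rm th}\le\gamma\le\gamma_2^{\rm th},\\[2mm] \dfrac{1}{\tau}, & \gamma>\gamma_2^{\rm th},\end{cases}$$ where $\mathcal{W}(\cdot)$ is the Lambert W function (the inverse of $x\mapsto xe^x$), the thresholds are $$\gamma_1^{\rm th}=\frac{\eta}{1-\beta e^{\theta T}(1-\theta T)},\qquad \gamma_2^{\rm th}=\frac{\eta}{1-\beta e^{\theta\tau}(1-\theta\tau)},$$ and the constant $\eta$ is determined by $\mathbb{E}\!\left[\lambda_{\rm opt}(\gamma)/\gamma\right]=\bar P_\ta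u$.
   Context: This arises in a status-update system over a block-fading channel with coherence time $T$, packet transmission time $\tau$, and AoI exponent $\theta$. The problem (P3) is the Dinkelbach transform of minimizing $\mathbb{E}[e^{\theta/\lambda(\gamma)}\lambda(\gamma)]/\mathbb{E}[\lambda(\gamma)]$ under the same constraints, with $\beta$ an auxiliary parameter; here $\bar P_\tau=\bar P/(\tau(e^{D\log 2/(\tau B)}-1))$ for average power $\bar P$, packet size $D$ bits and bandwidth $B$, but for the statement $\bar P_\tau$ is simply a positive constant. *)

theory Defs
  imports "HOL-Analysis.Analysis"
begin

definition lambertW :: "real \<Rightarrow> real" where
  "lambertW y = (THE w. -1 \<le> w \<and> w * exp w = y)"

text \<open>Thresholds gamma_th(t) = eta / (1 - beta e^(theta t) (1 - theta t)); gamma_1 uses t = T, gamma_2 uses t = tau.\<close>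
definition gamma_th :: "real \<Rightarrow> real \<Rightarrow> real \<Rightarrow> real \<Rightarrow> real" where
  "gamma_th \<theta> \<beta> \<eta> t = \<eta> / (1 - \<beta> * exp (\<theta> * t) * (1 - \<theta> * t))"

definition lambda_opt :: "real \<Rightarrow> real \<Rightarrow> real \<Rightarrow> real \<Rightarrow> real \<Rightarrow> real \<Rightarrow> real" where
  "lambda_opt \<theta> \<beta> \<eta> \<tau> T \<gamma> =
     (if \<gamma> < gamma_th \<theta> \<beta> \<eta> T then 1 / T
      else if \<gamma> \<le> gamma_th \<theta> \<beta> \<eta> \<tau>
        then \<theta> / (1 + lambertW ((\<eta> - \<gamma>) / (exp 1 * \<beta> * \<gamma>)))
      else 1 / \<tau>)"

text \<open>Expectation over gamma, whose law has Lebesgue density f (f vanishes on the negative reals).\<close>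
definition expect :: "(real \<Rightarrow> real) \<Rightarrow> (real \<Rightarrow> real) \<Rightarrow> real" where
  "expect f g = (\<integral>x. g x * f x \<partial>lborel)"

definition feasible :: "(real \<Rightarrow> real) \<Rightarrow> real \<Rightarrow> real \<Rightarrow> real \<Rightarrow> (real \<Rightarrow> real) \<Rightarrow> bool" where
  "feasible f P\<tau> \<tau> T lam \<longleftrightarrow>
     lam \<in> borel_measurable borel \<and>
     (\<forall>x>0. \<tau> * lam x \<le> 1 \<and> 1 \<le> T * lam x) \<and>
     (\<integral>\<^sup>+x. ennreal (lam x / x * f x) \<partial>lborel) \<le> ennreal P\<tau>"

definition obj :: "real \<Rightarrow> real \<Rightarrow> real \<Rightarrow> real" where
  "obj \<theta> \<beta> l = l * (\<beta> * exp (\<theta> / l) - 1)"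

end

theory Submission imports Defs begin

lemma wexp_strict:
  fixes a b :: real
  assumes "-1 \<le> a" "a < b"
  shows "a * exp a < b * exp b"
proof (rule DERIV_pos_imp_increasing_open[OF assms(2)])
  fix x :: real assume "a < x" "x < b"
  hence "0 < (1 + x) * exp x" using assms by simp
  moreover have "DERIV (\<lambda>w. w * exp w) x :> (1 * exp x + x * exp x)"
    by (auto intro!: derivative_eq_intros)
  ultimately show "\<exists>y. DERIV (\<lambda>w. w * exp w) x :> y \<and> 0 < y"
    by (metis distrib_right)
next
  show "continuous_on {a..b} (\<lambda>w. w * exp w)"
    by (intro continuous_intros)
qed

lemma lambertW_eq:
  assumes "-1 \<le> w"
  shows "lambertW (w * exp w) = w"
  unfolding lambertW_def
proof (rule the_equality)
  show "-1 \<le> w \<and> w * exp w = w * exp w" using assms by simp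
next
  fix v assume v: "-1 \<le> v \<and> v * exp v = w * exp w"
  show "v = w"
  proof (rule ccontr)
    assume "v \<noteq> w"
    then consider "v < w" | "w < v" by linarith
    thus False using wexp_strict[of v w] wexp_strict[of w v] v assms by cases auto
  qed
qed

lemma phi_mono:
  fixes s t :: real
  assumes "0 < s" "s < t"
  shows "exp t * (1 - t) \<le> exp s * (1 - s)"
proof (cases "s \<le> 1")
  case True
  have e: "exp (s - t) \<ge> 1 + (s - t)" by (rule exp_ge_add_one_self)
  have "exp (s - t) * (1 - s) \<ge> (1 + (s - t)) * (1 - s)"
    using e True by (intro mult_right_mono) auto
  moreover have "(1 + (s - t)) * (1 - s) = 1 - t + s * (t - s)" by (simp add: algebra_simps)
  moreover have "s * (t - s) \<ge> 0" using assms by simp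
  ultimately have "exp (s - t) * (1 - s) \<ge> 1 - t" by linarith
  hence "exp t * (exp (s - t) * (1 - s)) \<ge> exp t * (1 - t)" by simp
  moreover have "exp t * exp (s - t) = exp s" by (simp add: exp_add[symmetric])
  ultimately show ?thesis by (simp add: mult.assoc[symmetric])
next
  case False
  have e: "exp (t - s) \<ge> 1 + (t - s)" by (rule exp_ge_add_one_self)
  have "exp (t - s) * (1 - t) \<le> (1 + (t - s)) * (1 - t)"
    using e False assms by (intro mult_right_mono_neg) auto
  moreover have "(1 + (t - s)) * (1 - t) = 1 - s - t * (t - s)" by (simp add: algebra_simps)
  moreover have "t * (t - s) \<ge> 0" using assms by simp
  ultimately have "exp (t - s) * (1 - t) \<le> 1 - s" by linarith
  hence "exp s * (exp (t - s) * (1 - t)) \<le> exp s * (1 - s)" by simp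
  moreover have "exp s * exp (t - s) = exp t" by (simp add: exp_add[symmetric])
  ultimately show ?thesis by (simp add: mult.assoc[symmetric])
qed

lemma tangent:
  fixes a l \<theta> \<beta> c :: real
  assumes "0 < a" "0 < l" "0 < \<theta>" "0 < \<beta>"
  shows "obj \<theta> \<beta> a + c * a + (\<beta> * exp (\<theta> / a) * (1 - \<theta> / a) - 1 + c) * (l - a)
         \<le> obj \<theta> \<beta> l + c * l"
proof -
  have e: "exp (\<theta>/l - \<theta>/a) \<ge> 1 + (\<theta>/l - \<theta>/a)" by (rule exp_ge_add_one_self)
  have "exp (\<theta>/l) = exp (\<theta>/a) * exp (\<theta>/l - \<theta>/a)" by (simp add: exp_add[symmetric])
  hence "exp (\<theta>/l) \<ge> exp (\<theta>/a) * (1 + (\<theta>/l - \<theta>/a))" using e by simp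
  hence "l * exp (\<theta>/l) \<ge> l * (exp (\<theta>/a) * (1 + (\<theta>/l - \<theta>/a)))"
    using assms by (intro mult_left_mono) auto
  also have "l * (exp (\<theta>/a) * (1 + (\<theta>/l - \<theta>/a))) = exp (\<theta>/a) * (l - \<theta>*l/a + \<theta>)"
    using assms by (simp add: field_simps)
  finally have k: "exp (\<theta>/a) * (l - \<theta>*l/a + \<theta>) \<le> l * exp (\<theta>/l)" .
  have "obj \<theta> \<beta> a + c * a + (\<beta> * exp (\<theta> / a) * (1 - \<theta> / a) - 1 + c) * (l - a)
        = \<beta> * (exp (\<theta>/a) * (l - \<theta>*l/a + \<theta>)) - l + c * l"
    unfolding obj_def using assms by (simp add: field_simps)
  also have "\<dots> \<le> \<beta> * (l * exp (\<theta>/l)) - l + c * l"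
    using k assms by simp
  also have "\<dots> = obj \<theta> \<beta> l + c * l" unfolding obj_def by (simp add: algebra_simps)
  finally show ?thesis .
qed


lemma DT_pos:
  fixes \<theta> \<beta> \<tau> T :: real
  assumes "0 < \<theta>" "0 < \<beta>" "0 < \<tau>" "\<tau> < T"
    and "0 < 1 - \<beta> * exp (\<theta> * \<tau>) * (1 - \<theta> * \<tau>)"
  shows "1 - \<beta> * exp (\<theta> * \<tau>) * (1 - \<theta> * \<tau>) \<le> 1 - \<beta> * exp (\<theta> * T) * (1 - \<theta> * T)"
proof -
  have "exp (\<theta> * T) * (1 - \<theta> * T) \<le> exp (\<theta> * \<tau>) * (1 - \<theta> * \<tau>)"
    using assms by (intro phi_mono) auto
  hence "\<beta> * (exp (\<theta> * T) * (1 - \<theta> * T)) \<le> \<beta> * (exp (\<theta> * \<tau>) * (1 - \<theta> * \<tau>))"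
    using assms by (intro mult_left_mono) auto
  thus ?thesis by (simp add: mult.assoc)
qed

lemma pointwise:
  fixes \<theta> \<beta> \<tau> T \<eta> x :: real
  assumes th: "0 < \<theta>" and be: "0 < \<beta>" and ta: "0 < \<tau>" and tT: "\<tau> < T"
    and Dt: "0 < 1 - \<beta> * exp (\<theta> * \<tau>) * (1 - \<theta> * \<tau>)"
    and et: "0 \<le> \<eta>" and x: "0 < x"
  shows "1/T \<le> lambda_opt \<theta> \<beta> \<eta> \<tau> T x \<and> lambda_opt \<theta> \<beta> \<eta> \<tau> T x \<le> 1/\<tau> \<and>
    (\<forall>l. 1/T \<le> l \<and> l \<le> 1/\<tau> \<longrightarrow>
       obj \<theta> \<beta> (lambda_opt \<theta> \<beta> \<eta> \<tau> T x) + \<eta>/x * lambda_opt \<theta> \<beta> \<eta> \<tau> T x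
       \<le> obj \<theta> \<beta> l + \<eta>/x * l)"
proof -
  define DT where "DT = 1 - \<beta> * exp (\<theta> * T) * (1 - \<theta> * T)"
  define Dt' where "Dt' = 1 - \<beta> * exp (\<theta> * \<tau>) * (1 - \<theta> * \<tau>)"
  define c where "c = \<eta> / x"
  define L where "L = lambda_opt \<theta> \<beta> \<eta> \<tau> T x"
  have T: "0 < T" using ta tT by linarith
  have Dt'p: "0 < Dt'" using Dt Dt'_def by simp
  have DTp: "0 < DT" using DT_pos[OF th be ta tT Dt] Dt unfolding DT_def by linarith
  have g1: "gamma_th \<theta> \<beta> \<eta> T = \<eta> / DT" unfolding gamma_th_def DT_def ..
  have g2: "gamma_th \<theta> \<beta> \<eta> \<tau> = \<eta> / Dt'" unfolding gamma_th_def Dt'_def ..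
  have invT: "1/T \<le> 1/\<tau>" using ta tT by (simp add: frac_le)
  have TAN: "obj \<theta> \<beta> a + c * a + (\<beta> * exp (\<theta> / a) * (1 - \<theta> / a) - 1 + c) * (l - a)
         \<le> obj \<theta> \<beta> l + c * l" if "0 < a" "0 < l" for a l
    using tangent[OF that th be] .
  show ?thesis
  proof (cases "x < gamma_th \<theta> \<beta> \<eta> T")
    case True
    hence LT: "L = 1/T" unfolding L_def lambda_opt_def by simp
    have "x * DT < \<eta>" using True DTp g1 by (simp add: pos_less_divide_eq)
    hence "DT < c" unfolding c_def using x by (simp add: pos_less_divide_eq mult.commute)
    hence D: "0 \<le> \<beta> * exp (\<theta> / (1/T)) * (1 - \<theta> / (1/T)) - 1 + c" unfolding DT_def by simp
    have "obj \<theta> \<beta> L + c * L \<le> obj \<theta> \<beta> l + c * l" if "1/T \<le> l" for l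
    proof -
      have "0 < l" using that T by (smt (verit) divide_pos_pos)
      have "0 \<le> (\<beta> * exp (\<theta> / (1/T)) * (1 - \<theta> / (1/T)) - 1 + c) * (l - 1/T)"
        using D that by simp
      thus ?thesis using TAN[of "1/T" l] T \<open>0 < l\<close> LT by simp
    qed
    thus ?thesis using LT invT unfolding L_def c_def by auto
  next
    case F1: False
    show ?thesis
    proof (cases "x \<le> gamma_th \<theta> \<beta> \<eta> \<tau>")
      case F2: False
      hence LT: "L = 1/\<tau>" using F1 unfolding L_def lambda_opt_def by simp
      have "\<eta> < x * Dt'" using F2 Dt'p g2 by (simp add: not_le pos_divide_less_eq)
      hence "c < Dt'" unfolding c_def using x by (simp add: divide_less_eq mult.commute)
      hence D: "\<beta> * exp (\<theta> / (1/\<tau>)) * (1 - \<theta> / (1/\<tau>)) - 1 + c \<le> 0" unfolding Dt'_def by simp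
      have "obj \<theta> \<beta> L + c * L \<le> obj \<theta> \<beta> l + c * l" if "1/T \<le> l" "l \<le> 1/\<tau>" for l
      proof -
        have "0 < l" using that T by (smt (verit) divide_pos_pos)
        have "0 \<le> (\<beta> * exp (\<theta> / (1/\<tau>)) * (1 - \<theta> / (1/\<tau>)) - 1 + c) * (l - 1/\<tau>)"
          using D that by (intro mult_nonpos_nonpos) auto
        thus ?thesis using TAN[of "1/\<tau>" l] ta \<open>0 < l\<close> LT by simp
      qed
      thus ?thesis using LT invT unfolding L_def c_def by auto
    next
      case F2: True
      define y where "y = (\<eta> - x) / (exp 1 * \<beta> * x)"
      have LW: "L = \<theta> / (1 + lambertW y)" using F1 F2 unfolding L_def lambda_opt_def y_def by simp
      have h1: "x * DT \<ge> \<eta>" using F1 DTp g1 by (simp add: not_less pos_divide_le_eq)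
      have h2: "x * Dt' \<le> \<eta>" using F2 Dt'p g2 by (simp add: pos_le_divide_eq)
      have ebx: "0 < exp 1 * \<beta> * x" using be x by simp
      have "y \<le> (\<theta>*T - 1) * exp (\<theta>*T - 1)"
      proof -
        have "\<eta> - x \<le> \<beta> * x * (\<theta>*T - 1) * exp (\<theta>*T)" using h1 unfolding DT_def
          by (simp add: algebra_simps)
        also have "\<dots> = (exp 1 * \<beta> * x) * ((\<theta>*T - 1) * exp (\<theta>*T - 1))"
          by (simp add: exp_diff)
        finally show ?thesis unfolding y_def using ebx by (simp add: pos_divide_le_eq mult.commute)
      qed
      moreover have "(\<theta>*\<tau> - 1) * exp (\<theta>*\<tau> - 1) \<le> y"
      proof -
        have "(exp 1 * \<beta> * x) * ((\<theta>*\<tau> - 1) * exp (\<theta>*\<tau> - 1)) = \<beta> * x * (\<theta>*\<tau> - 1) * exp (\<theta>*\<tau>)"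
          by (simp add: exp_diff)
        also have "\<dots> \<le> \<eta> - x" using h2 unfolding Dt'_def
          by (simp add: algebra_simps)
        finally show ?thesis unfolding y_def using ebx by (simp add: pos_le_divide_eq mult.commute)
      qed
      moreover have "\<theta>*\<tau> - 1 \<le> \<theta>*T - 1" using th tT by simp
      moreover have "continuous_on {\<theta>*\<tau> - 1 .. \<theta>*T - 1} (\<lambda>w. w * exp w)"
        by (intro continuous_intros)
      ultimately obtain w where w: "\<theta>*\<tau> - 1 \<le> w" "w \<le> \<theta>*T - 1" "w * exp w = y"
        using IVT'[of "\<lambda>w. w * exp w" "\<theta>*\<tau> - 1" y "\<theta>*T - 1"] by blast
      have wpos: "0 < 1 + w" using w th ta by (smt (verit) mult_pos_pos)
      have "lambertW y = w" using lambertW_eq[of w] w wpos by simp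
      hence LW2: "L = \<theta> / (1 + w)" using LW by simp
      have Lpos: "0 < L" using LW2 wpos th by simp
      have b1: "1/T \<le> L" unfolding LW2 using w wpos T th
        by (simp add: divide_simps)
      have b2: "L \<le> 1/\<tau>" unfolding LW2 using w wpos ta th
        by (simp add: divide_simps)
      have thL: "\<theta> / L = 1 + w" unfolding LW2 using th wpos by simp
      have "\<beta> * exp (\<theta> / L) * (1 - \<theta> / L) - 1 + c = - (exp 1 * \<beta> * x) * (w * exp w) / x - 1 + c"
        unfolding thL using x by (simp add: exp_add algebra_simps)
      also have "\<dots> = - (\<eta> - x) / x - 1 + \<eta> / x"
      proof -
        have m: "exp 1 * \<beta> * x * ((\<eta> - x) / (exp 1 * \<beta> * x)) = \<eta> - x" using ebx by (metis less_irrefl nonzero_mult_div_cancel_left times_divide_eq_right)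
        show ?thesis unfolding w(3) y_def c_def mult_minus_left m ..
      qed
      also have "\<dots> = 0" using x by (simp add: field_simps)
      finally have D0: "\<beta> * exp (\<theta> / L) * (1 - \<theta> / L) - 1 + c = 0" .
      have "obj \<theta> \<beta> L + c * L \<le> obj \<theta> \<beta> l + c * l" if "1/T \<le> l" for l
      proof -
        have "0 < l" using that T by (smt (verit) divide_pos_pos)
        thus ?thesis using TAN[of L l] Lpos D0 by simp
      qed
      thus ?thesis using b1 b2 unfolding L_def c_def by auto
    qed
  qed
qed


lemma obj_bound:
  fixes \<theta> \<beta> \<tau> T l :: real
  assumes "0 < \<theta>" "0 < \<beta>" "0 < \<tau>" "\<tau> < T" "1/T \<le> l" "l \<le> 1/\<tau>"
  shows "\<bar>obj \<theta> \<beta> l\<bar> \<le> (\<beta> * exp (\<theta> * T) + 1) / \<tau>"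
proof -
  have T: "0 < T" using assms by linarith
  have lp: "0 < l" using assms T by (smt (verit) divide_pos_pos)
  have "\<theta> / l \<le> \<theta> * T"
    using assms lp T by (simp add: divide_simps) (smt (verit) mult_left_mono mult.commute)
  hence e: "exp (\<theta> / l) \<le> exp (\<theta> * T)" by simp
  have "\<bar>obj \<theta> \<beta> l\<bar> = l * \<bar>\<beta> * exp (\<theta> / l) - 1\<bar>" unfolding obj_def using lp by (simp add: abs_mult)
  also have "\<dots> \<le> l * (\<beta> * exp (\<theta> * T) + 1)"
  proof (rule mult_left_mono)
    have "\<beta> * exp (\<theta> / l) \<le> \<beta> * exp (\<theta> * T)" using e assms by simp
    moreover have "0 \<le> \<beta> * exp (\<theta> / l)" using assms by simp
    ultimately show "\<bar>\<beta> * exp (\<theta> / l) - 1\<bar> \<le> \<beta> * exp (\<theta> * T) + 1" by linarith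
  qed (use lp in simp)
  also have "\<dots> \<le> (1/\<tau>) * (\<beta> * exp (\<theta> * T) + 1)"
    using assms by (intro mult_right_mono) (auto intro: add_nonneg_nonneg)
  finally show ?thesis by simp
qed


theorem theorem1:
  fixes f :: "real \<Rightarrow> real" and \<theta> \<beta> P\<tau> \<tau> T \<eta> :: real
  assumes f_meas: "f \<in> borel_measurable borel"
    and f_nonneg: "\<forall>x. 0 \<le> f x"
    and f_supp: "\<forall>x<0. f x = 0"
    and f_total: "(\<integral>\<^sup>+x. ennreal (f x) \<partial>lborel) = 1"
    and \<theta>_pos: "0 < \<theta>" and \<beta>_pos: "0 < \<beta>" and P_pos: "0 < P\<tau>"
    and \<tau>_pos: "0 < \<tau>" and \<tau>_lt_T: "\<tau> < T"
    and thresholds_wd: "0 < 1 - \<beta> * exp (\<theta> * \<tau>) * (1 - \<theta> * \<tau>)"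
    and \<eta>_nonneg: "0 \<le> \<eta>"
    and \<eta>_power: "(\<integral>\<^sup>+x. ennreal (lambda_opt \<theta> \<beta> \<eta> \<tau> T x / x * f x) \<partial>lborel) = ennreal P\<tau>"
  shows "feasible f P\<tau> \<tau> T (lambda_opt \<theta> \<beta> \<eta> \<tau> T) \<and>
         (\<forall>lam. feasible f P\<tau> \<tau> T lam \<longrightarrow>
            expect f (\<lambda>x. obj \<theta> \<beta> (lambda_opt \<theta> \<beta> \<eta> \<tau> T x))
              \<le> expect f (\<lambda>x. obj \<theta> \<beta> (lam x)))"
proof -
  define L where "L = lambda_opt \<theta> \<beta> \<eta> \<tau> T"
  have T: "0 < T" using \<tau>_pos \<tau>_lt_T by linarith
  have PW: "1/T \<le> L x \<and> L x \<le> 1/\<tau> \<and>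
    (\<forall>l. 1/T \<le> l \<and> l \<le> 1/\<tau> \<longrightarrow> obj \<theta> \<beta> (L x) + \<eta>/x * L x \<le> obj \<theta> \<beta> l + \<eta>/x * l)"
    if "0 < x" for x
    unfolding L_def using pointwise[OF \<theta>_pos \<beta>_pos \<tau>_pos \<tau>_lt_T thresholds_wd \<eta>_nonneg that] .
  have DTp: "0 < 1 - \<beta> * exp (\<theta> * T) * (1 - \<theta> * T)"
    using DT_pos[OF \<theta>_pos \<beta>_pos \<tau>_pos \<tau>_lt_T thresholds_wd] thresholds_wd by linarith
  have Lneg: "L x = 1/T" if "x < 0" for x
  proof -
    have "0 \<le> gamma_th \<theta> \<beta> \<eta> T" unfolding gamma_th_def using DTp \<eta>_nonneg by simp
    thus ?thesis using that unfolding L_def lambda_opt_def by simp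
  qed
  define m where "m x = (if 0 < x then L x else 1/T)" for x
  have mono_pos: "L x \<le> L y" if "0 < x" "x < y" for x y
  proof (cases "\<eta> = 0")
    case True
    have "L z = 1/\<tau>" if "0 < z" for z
      using that True unfolding L_def lambda_opt_def gamma_th_def by simp
    thus ?thesis using that by simp
  next
    case False
    hence ep: "0 < \<eta>" using \<eta>_nonneg by simp
    have y: "0 < y" using that by simp
    have a: "obj \<theta> \<beta> (L x) + \<eta>/x * L x \<le> obj \<theta> \<beta> (L y) + \<eta>/x * L y"
      using PW[OF that(1)] PW[OF y] by blast
    have b: "obj \<theta> \<beta> (L y) + \<eta>/y * L y \<le> obj \<theta> \<beta> (L x) + \<eta>/y * L x"
      using PW[OF that(1)] PW[OF y] by blast
    have c: "\<eta>/y < \<eta>/x" using that ep by (simp add: divide_strict_left_mono)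
    from a b have "(\<eta>/x - \<eta>/y) * (L x - L y) \<le> 0" by (simp add: algebra_simps)
    thus ?thesis using c by (simp add: mult_le_0_iff)
  qed
  have "mono m"
  proof (rule monoI)
    fix x y :: real assume "x \<le> y"
    thus "m x \<le> m y" unfolding m_def using mono_pos PW
      by (cases "x < y") auto
  qed
  hence mmeas: "m \<in> borel_measurable borel" by (rule borel_measurable_mono)
  have "L = (\<lambda>x. if x = 0 then L 0 else m x)"
    by (rule ext) (simp add: m_def Lneg)
  also have "\<dots> \<in> borel_measurable borel" using mmeas by measurable
  finally have Lmeas: "L \<in> borel_measurable borel" .
  have feasL: "feasible f P\<tau> \<tau> T L"
    unfolding feasible_def
  proof (intro conjI allI impI)
    fix x :: real assume "0 < x"
    thus "\<tau> * L x \<le> 1" "1 \<le> T * L x" using PW[of x] \<tau>_pos T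
      by (auto simp: divide_simps mult.commute)
  qed (use Lmeas \<eta>_power L_def in auto)
  have fint: "integrable lborel f"
    using f_meas f_nonneg f_total by (intro integrableI_nonneg) auto
  define C where "C = (\<beta> * exp (\<theta> * T) + 1) / \<tau>"
  have objint: "integrable lborel (\<lambda>x. obj \<theta> \<beta> (g x) * f x)"
    if gm: "g \<in> borel_measurable borel" and gb: "\<forall>x>0. 1/T \<le> g x \<and> g x \<le> 1/\<tau>" for g
  proof (rule Bochner_Integration.integrable_bound[where f="\<lambda>x. C * f x"])
    show "integrable lborel (\<lambda>x. C * f x)" using fint by simp
    show "(\<lambda>x. obj \<theta> \<beta> (g x) * f x) \<in> borel_measurable lborel"
      using gm f_meas unfolding obj_def by measurable
    show "AE x in lborel. norm (obj \<theta> \<beta> (g x) * f x) \<le> norm (C * f x)"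
      using AE_lborel_singleton[of 0]
    proof eventually_elim
      case (elim x)
      show ?case
      proof (cases "x < 0")
        case True thus ?thesis using f_supp by simp
      next
        case False
        hence "0 < x" using elim by simp
        hence "\<bar>obj \<theta> \<beta> (g x)\<bar> \<le> C" unfolding C_def
          using gb obj_bound[OF \<theta>_pos \<beta>_pos \<tau>_pos \<tau>_lt_T] by blast
        hence "\<bar>obj \<theta> \<beta> (g x)\<bar> * \<bar>f x\<bar> \<le> C * \<bar>f x\<bar>" by (intro mult_right_mono) auto
        moreover have "0 \<le> C" unfolding C_def using \<tau>_pos \<beta>_pos by (intro divide_nonneg_pos add_nonneg_nonneg) auto
        ultimately show ?thesis by (simp add: abs_mult)
      qed
    qed
  qed
  have powint: "integrable lborel (\<lambda>x. g x / x * f x) \<and> integral\<^sup>L lborel (\<lambda>x. g x / x * f x) \<le> P\<tau>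
      \<and> ennreal (integral\<^sup>L lborel (\<lambda>x. g x / x * f x)) = (\<integral>\<^sup>+x. ennreal (g x / x * f x) \<partial>lborel)
      \<and> 0 \<le> integral\<^sup>L lborel (\<lambda>x. g x / x * f x)"
    if gm: "g \<in> borel_measurable borel" and gb: "\<forall>x>0. 1/T \<le> g x"
      and gP: "(\<integral>\<^sup>+x. ennreal (g x / x * f x) \<partial>lborel) \<le> ennreal P\<tau>" for g
  proof -
    have nn: "0 \<le> g x / x * f x" for x
    proof (cases "x < 0")
      case True thus ?thesis using f_supp by simp
    next
      case False
      show ?thesis
      proof (cases "x = 0")
        case False
        hence "0 < x" using \<open>\<not> x < 0\<close> by simp
        hence "0 < g x" using gb T by (smt (verit) divide_pos_pos)
        thus ?thesis using \<open>0 < x\<close> f_nonneg by simp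
      qed simp
    qed
    have me: "(\<lambda>x. g x / x * f x) \<in> borel_measurable lborel" using gm f_meas by measurable
    have i: "integrable lborel (\<lambda>x. g x / x * f x)"
    proof (rule integrableI_nonneg[OF me])
      show "AE x in lborel. 0 \<le> g x / x * f x" using nn by simp
      show "(\<integral>\<^sup>+x. ennreal (g x / x * f x) \<partial>lborel) < \<infinity>"
        using le_less_trans[OF gP ennreal_less_top] by simp
    qed
    have e: "(\<integral>\<^sup>+x. ennreal (g x / x * f x) \<partial>lborel) = ennreal (integral\<^sup>L lborel (\<lambda>x. g x / x * f x))"
      using i nn by (intro nn_integral_eq_integral) auto
    have "integral\<^sup>L lborel (\<lambda>x. g x / x * f x) \<le> P\<tau>"
    proof -
      have "ennreal (integral\<^sup>L lborel (\<lambda>x. g x / x * f x)) \<le> ennreal P\<tau>" using gP e by simp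
      thus ?thesis using P_pos ennreal_le_iff by auto
    qed
    moreover have "0 \<le> integral\<^sup>L lborel (\<lambda>x. g x / x * f x)" using nn by (intro integral_nonneg_AE) simp
    ultimately show ?thesis using i e by simp
  qed
  have Lb: "\<forall>x>0. 1/T \<le> L x \<and> L x \<le> 1/\<tau>" using PW by blast
  have objL: "integrable lborel (\<lambda>x. obj \<theta> \<beta> (L x) * f x)" using objint[OF Lmeas Lb] .
  have powL: "integrable lborel (\<lambda>x. L x / x * f x)" "integral\<^sup>L lborel (\<lambda>x. L x / x * f x) = P\<tau>"
  proof -
    have *: "(\<integral>\<^sup>+x. ennreal (L x / x * f x) \<partial>lborel) = ennreal P\<tau>" using \<eta>_power L_def by simp
    have **: "integrable lborel (\<lambda>x. L x / x * f x) \<and> integral\<^sup>L lborel (\<lambda>x. L x / x * f x) \<le> P\<tau>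
      \<and> ennreal (integral\<^sup>L lborel (\<lambda>x. L x / x * f x)) = (\<integral>\<^sup>+x. ennreal (L x / x * f x) \<partial>lborel)
      \<and> 0 \<le> integral\<^sup>L lborel (\<lambda>x. L x / x * f x)"
      using powint[OF Lmeas] Lb * by simp
    thus "integrable lborel (\<lambda>x. L x / x * f x)" by simp
    have "0 \<le> integral\<^sup>L lborel (\<lambda>x. L x / x * f x)"
      using ** by blast
    moreover have "ennreal (integral\<^sup>L lborel (\<lambda>x. L x / x * f x)) = ennreal P\<tau>" using ** * by simp
    ultimately show "integral\<^sup>L lborel (\<lambda>x. L x / x * f x) = P\<tau>" using P_pos by simp
  qed
  have opt: "expect f (\<lambda>x. obj \<theta> \<beta> (L x)) \<le> expect f (\<lambda>x. obj \<theta> \<beta> (lam x))"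
    if fl: "feasible f P\<tau> \<tau> T lam" for lam
  proof -
    have lm: "lam \<in> borel_measurable borel" and lb0: "\<forall>x>0. \<tau> * lam x \<le> 1 \<and> 1 \<le> T * lam x"
      and lP: "(\<integral>\<^sup>+x. ennreal (lam x / x * f x) \<partial>lborel) \<le> ennreal P\<tau>"
      using fl unfolding feasible_def by auto
    have lb: "\<forall>x>0. 1/T \<le> lam x \<and> lam x \<le> 1/\<tau>"
      using lb0 T \<tau>_pos by (auto simp: divide_simps mult.commute)
    have objl: "integrable lborel (\<lambda>x. obj \<theta> \<beta> (lam x) * f x)" using objint[OF lm lb] .
    have powl: "integrable lborel (\<lambda>x. lam x / x * f x)" "integral\<^sup>L lborel (\<lambda>x. lam x / x * f x) \<le> P\<tau>"
    proof -
      have "\<forall>x>0. 1/T \<le> lam x" using lb by blast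
      from powint[OF lm this lP] show "integrable lborel (\<lambda>x. lam x / x * f x)"
        "integral\<^sup>L lborel (\<lambda>x. lam x / x * f x) \<le> P\<tau>" by simp_all
    qed
    have "integral\<^sup>L lborel (\<lambda>x. obj \<theta> \<beta> (L x) * f x + \<eta> * (L x / x * f x))
        \<le> integral\<^sup>L lborel (\<lambda>x. obj \<theta> \<beta> (lam x) * f x + \<eta> * (lam x / x * f x))"
    proof (rule integral_mono_AE)
      show "integrable lborel (\<lambda>x. obj \<theta> \<beta> (L x) * f x + \<eta> * (L x / x * f x))"
        using objL powL(1) by (intro Bochner_Integration.integrable_add integrable_mult_right)
      show "integrable lborel (\<lambda>x. obj \<theta> \<beta> (lam x) * f x + \<eta> * (lam x / x * f x))"
        using objl powl(1) by (intro Bochner_Integration.integrable_add integrable_mult_right)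
      show "AE x in lborel. obj \<theta> \<beta> (L x) * f x + \<eta> * (L x / x * f x)
          \<le> obj \<theta> \<beta> (lam x) * f x + \<eta> * (lam x / x * f x)"
        using AE_lborel_singleton[of 0]
      proof eventually_elim
        case (elim x)
        show ?case
        proof (cases "x < 0")
          case True thus ?thesis using f_supp by simp
        next
          case False
          hence "0 < x" using elim by simp
          hence "obj \<theta> \<beta> (L x) + \<eta>/x * L x \<le> obj \<theta> \<beta> (lam x) + \<eta>/x * lam x"
            using PW lb by blast
          hence "(obj \<theta> \<beta> (L x) + \<eta>/x * L x) * f x \<le> (obj \<theta> \<beta> (lam x) + \<eta>/x * lam x) * f x"
            using f_nonneg by (intro mult_right_mono) auto
          thus ?thesis by (simp add: algebra_simps)
        qed
      qed
    qed
    hence "integral\<^sup>L lborel (\<lambda>x. obj \<theta> \<beta> (L x) * f x) + \<eta> * integral\<^sup>L lborel (\<lambda>x. L x / x * f x)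
        \<le> integral\<^sup>L lborel (\<lambda>x. obj \<theta> \<beta> (lam x) * f x) + \<eta> * integral\<^sup>L lborel (\<lambda>x. lam x / x * f x)"
      by (simp only: Bochner_Integration.integral_add[OF objL integrable_mult_right[OF powL(1)]]
          Bochner_Integration.integral_add[OF objl integrable_mult_right[OF powl(1)]] integral_mult_right_zero)
    moreover have "\<eta> * integral\<^sup>L lborel (\<lambda>x. lam x / x * f x) \<le> \<eta> * P\<tau>"
      using powl \<eta>_nonneg by (intro mult_left_mono) auto
    ultimately show ?thesis unfolding expect_def using powL by simp
  qed
  show ?thesis using feasL opt unfolding L_def by blast
qed
end
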